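(* Let $f_\omega\in\ell_1([0,\omega])$ be defined by $f_\omega(\omega)=1$ and $f_\omega(n)=0$ for $n<\omega$. Then $f_\omega\in d_{1/2}^{\omega}(B_{\ell_1([0,\omega])})$.
   Context: $[0,\omega]$ is the ordinal interval with the order topology, $\ell_1([0,\omega])$ is identified with $C([0,\omega])^*$ with the corresponding weak$^*$-topology. For $x\in C([0,\omega]),t\in\mathbb R$, $H(x,t)=\{h: h(x)>t\}$; a weak$^*$-slice of a weak$^*$-compact $K$ is a nonempty $H(x,t)\cap K$; $d_\varepsilon K$ is $K$ minus the union of all weak$^*$-slices of $K$ of norm diameter $<\varepsilon$; $d_\varepsilon^0K=K$, $d_\varepsilon^{\beta+1}K=d_\varepsilon(d_\varepsilon^\beta K)$, $d_\varepsilon^\beta K=\bigcap_{\mu<\beta}d_\varepsilon^\mu K$ for limit $\beta$. *)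

theory Defs
  imports "HOL-Analysis.Analysis"
begin

text \<open>The ordinal interval [0,omega] is modelled by the type enat (points enat n and infinity),
  carrying its order topology (instance linorder_topology from HOL-Library.Extended_Real).\<close>

definition C0w :: "(enat \<Rightarrow> real) set" where
  "C0w = {x. continuous_on UNIV x}"

definition l1w :: "(enat \<Rightarrow> real) set" where
  "l1w = {h. (\<lambda>t. norm (h t)) summable_on UNIV}"

definition l1norm :: "(enat \<Rightarrow> real) \<Rightarrow> real" where
  "l1norm h = (\<Sum>\<^sub>\<infinity>t. \<bar>h t\<bar>)"

definition pair :: "(enat \<Rightarrow> real) \<Rightarrow> (enat \<Rightarrow> real) \<Rightarrow> real" where
  "pair h x = (\<Sum>\<^sub>\<infinity>t. h t * x t)"

definition B_l1 :: "(enat \<Rightarrow> real) set" where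
  "B_l1 = {h \<in> l1w. l1norm h \<le> 1}"

definition wslice :: "(enat \<Rightarrow> real) set \<Rightarrow> (enat \<Rightarrow> real) \<Rightarrow> real \<Rightarrow> (enat \<Rightarrow> real) set" where
  "wslice K x t = {h \<in> K. pair h x > t}"

definition is_wslice :: "(enat \<Rightarrow> real) set \<Rightarrow> (enat \<Rightarrow> real) set \<Rightarrow> bool" where
  "is_wslice K S \<longleftrightarrow> (\<exists>x t. x \<in> C0w \<and> S = wslice K x t \<and> S \<noteq> {})"

definition diam_lt :: "(enat \<Rightarrow> real) set \<Rightarrow> real \<Rightarrow> bool" where
  "diam_lt S eps \<longleftrightarrow> (\<exists>\<delta> < eps. \<forall>h\<in>S. \<forall>g\<in>S. l1norm (\<lambda>t. h t - g t) \<le> \<delta>)"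

definition dset :: "real \<Rightarrow> (enat \<Rightarrow> real) set \<Rightarrow> (enat \<Rightarrow> real) set" where
  "dset eps K = K - \<Union>{S. is_wslice K S \<and> diam_lt S eps}"

fun dset_iter :: "real \<Rightarrow> nat \<Rightarrow> (enat \<Rightarrow> real) set \<Rightarrow> (enat \<Rightarrow> real) set" where
  "dset_iter eps 0 K = K"
| "dset_iter eps (Suc n) K = dset eps (dset_iter eps n K)"

definition dset_omega :: "real \<Rightarrow> (enat \<Rightarrow> real) set \<Rightarrow> (enat \<Rightarrow> real) set" where
  "dset_omega eps K = (\<Inter>n. dset_iter eps n K)"

definition f_omega :: "enat \<Rightarrow> real" where
  "f_omega t = (if t = \<infinity> then 1 else 0)"

end

theory Submission
  imports Defs
begin

definition U :: "nat \<Rightarrow> nat \<Rightarrow> enat \<Rightarrow> real" where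
  "U m k t = (case t of enat i \<Rightarrow> if m \<le> i \<and> i < m + 2^k then 1/2^k else 0 | \<infinity> \<Rightarrow> 0)"

lemma U_enat[simp]: "U m k (enat i) = (if m \<le> i \<and> i < m + 2^k then 1/2^k else 0)"
  by (simp add: U_def)

lemma U_inf[simp]: "U m k \<infinity> = 0"
  by (simp add: U_def)

lemma U_vanish: "t \<notin> enat ` {m..<m+2^k} \<Longrightarrow> U m k t = 0"
  by (cases t) auto

lemma fin_sum:
  fixes g :: "enat \<Rightarrow> real"
  assumes "finite F" "\<And>t. t \<notin> enat ` F \<Longrightarrow> g t = 0"
  shows "g summable_on UNIV" "infsum g UNIV = (\<Sum>j\<in>F. g (enat j))"
proof -
  have fi: "finite (enat ` F)" using assms(1) by simp
  have "{x\<in>UNIV. g x \<noteq> 0} \<subseteq> enat ` F" using assms(2) by blast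
  then show "g summable_on UNIV"
    by (intro finite_nonzero_values_imp_summable_on finite_subset[OF _ fi])
  have "infsum g UNIV = infsum g (enat ` F)"
    by (rule infsum_cong_neutral) (use assms in auto)
  also have "\<dots> = sum g (enat ` F)" using fi by simp
  also have "\<dots> = (\<Sum>j\<in>F. g (enat j))" by (simp add: sum.reindex inj_on_def)
  finally show "infsum g UNIV = (\<Sum>j\<in>F. g (enat j))" .
qed

lemma U_l1: "U m k \<in> l1w"
  unfolding l1w_def
  using fin_sum(1)[of "{m..<m+2^k}" "\<lambda>t. norm (U m k t)"] U_vanish by auto

lemma U_norm: "l1norm (U m k) = 1"
proof -
  have "l1norm (U m k) = (\<Sum>j\<in>{m..<m+2^k}. \<bar>U m k (enat j)\<bar>)"
    unfolding l1norm_def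
    using fin_sum(2)[of "{m..<m+2^k}" "\<lambda>t. \<bar>U m k t\<bar>"] U_vanish by auto
  also have "\<dots> = (\<Sum>j\<in>{m..<m+2^k}. 1/2^k)"
    by (rule sum.cong) auto
  also have "\<dots> = 1" by simp
  finally show ?thesis .
qed

lemma U_B: "U m k \<in> B_l1"
  using U_l1 U_norm by (simp add: B_l1_def)

lemma U_pair: "pair (U m k) x = (\<Sum>j\<in>{m..<m+2^k}. x (enat j)) / 2^k"
proof -
  have "pair (U m k) x = (\<Sum>j\<in>{m..<m+2^k}. U m k (enat j) * x (enat j))"
    unfolding pair_def
    using fin_sum(2)[of "{m..<m+2^k}" "\<lambda>t. U m k t * x t"] U_vanish by auto
  also have "\<dots> = (\<Sum>j\<in>{m..<m+2^k}. x (enat j) / 2^k)"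
    by (rule sum.cong) auto
  also have "\<dots> = (\<Sum>j\<in>{m..<m+2^k}. x (enat j)) / 2^k"
    by (simp add: sum_divide_distrib)
  finally show ?thesis .
qed

lemma U_dist1: "l1norm (\<lambda>t. U m (Suc k) t - U m k t) = 1"
proof -
  have "l1norm (\<lambda>t. U m (Suc k) t - U m k t)
      = (\<Sum>j\<in>{m..<m+2^Suc k}. \<bar>U m (Suc k) (enat j) - U m k (enat j)\<bar>)"
    unfolding l1norm_def
    apply (rule fin_sum(2))
    apply simp
    apply (case_tac t)
    apply auto
    done
  also have "\<dots> = (\<Sum>j\<in>{m..<m+2^k}. \<bar>U m (Suc k) (enat j) - U m k (enat j)\<bar>)
      + (\<Sum>j\<in>{m+2^k..<m+2^Suc k}. \<bar>U m (Suc k) (enat j) - U m k (enat j)\<bar>)"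
    by (rule sum.atLeastLessThan_concat[symmetric]) auto
  also have "(\<Sum>j\<in>{m..<m+2^k}. \<bar>U m (Suc k) (enat j) - U m k (enat j)\<bar>)
      = (\<Sum>j\<in>{m..<m+2^k}. 1/2^Suc k)"
    by (rule sum.cong) auto
  also have "(\<Sum>j\<in>{m+2^k..<m+2^Suc k}. \<bar>U m (Suc k) (enat j) - U m k (enat j)\<bar>)
      = (\<Sum>j\<in>{m+2^k..<m+2^Suc k}. 1/2^Suc k)"
    by (rule sum.cong) auto
  finally show ?thesis by simp
qed

lemma U_dist2: "l1norm (\<lambda>t. U m (Suc k) t - U (m+2^k) k t) = 1"
proof -
  have "l1norm (\<lambda>t. U m (Suc k) t - U (m+2^k) k t)
      = (\<Sum>j\<in>{m..<m+2^Suc k}. \<bar>U m (Suc k) (enat j) - U (m+2^k) k (enat j)\<bar>)"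
    unfolding l1norm_def
    apply (rule fin_sum(2))
    apply simp
    apply (case_tac t)
    apply auto
    done
  also have "\<dots> = (\<Sum>j\<in>{m..<m+2^k}. \<bar>U m (Suc k) (enat j) - U (m+2^k) k (enat j)\<bar>)
      + (\<Sum>j\<in>{m+2^k..<m+2^Suc k}. \<bar>U m (Suc k) (enat j) - U (m+2^k) k (enat j)\<bar>)"
    by (rule sum.atLeastLessThan_concat[symmetric]) auto
  also have "(\<Sum>j\<in>{m..<m+2^k}. \<bar>U m (Suc k) (enat j) - U (m+2^k) k (enat j)\<bar>)
      = (\<Sum>j\<in>{m..<m+2^k}. 1/2^Suc k)"
    by (rule sum.cong) auto
  also have "(\<Sum>j\<in>{m+2^k..<m+2^Suc k}. \<bar>U m (Suc k) (enat j) - U (m+2^k) k (enat j)\<bar>)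
      = (\<Sum>j\<in>{m+2^k..<m+2^Suc k}. 1/2^Suc k)"
    by (rule sum.cong) auto
  finally show ?thesis by simp
qed

lemma avg_split:
  assumes "pair (U m (Suc k)) x > t"
  shows "pair (U m k) x > t \<or> pair (U (m+2^k) k) x > t"
proof -
  have "(\<Sum>j\<in>{m..<m+2^Suc k}. x (enat j)) = (\<Sum>j\<in>{m..<m+2^k}. x (enat j)) + (\<Sum>j\<in>{m+2^k..<m+2^k+2^k}. x (enat j))"
    by (subst sum.atLeastLessThan_concat[symmetric, of m "m+2^k"]) (auto simp: add.assoc mult_2)
  then show ?thesis using assms by (auto simp: U_pair field_simps)
qed

lemma claim: "n \<le> k \<Longrightarrow> U m k \<in> dset_iter (1/2) n B_l1"
proof (induction n arbitrary: m k)
  case 0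
  then show ?case using U_B by simp
next
  case (Suc n)
  then obtain k' where k: "k = Suc k'" and kn: "n \<le> k'" by (cases k) auto
  define K where "K = dset_iter (1/2) n B_l1"
  have W: "U m k \<in> K" using Suc K_def by simp
  have A: "U m k' \<in> K" using Suc.IH kn K_def by simp
  have B: "U (m+2^k') k' \<in> K" using Suc.IH kn K_def by simp
  have "U m (Suc k') \<in> dset (1/2) K"
    unfolding dset_def
  proof (intro DiffI notI)
    show "U m (Suc k') \<in> K" using W k by simp
  next
    assume "U m (Suc k') \<in> \<Union>{S. is_wslice K S \<and> diam_lt S (1/2)}"
    then obtain S where S: "U m (Suc k') \<in> S" "is_wslice K S" "diam_lt S (1/2)" by blast
    then obtain x t where St: "S = wslice K x t" unfolding is_wslice_def by blast
    obtain \<delta> where d: "\<delta> < 1/2" "\<forall>h\<in>S. \<forall>g\<in>S. l1norm (\<lambda>t. h t - g t) \<le> \<delta>"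
      using S(3) unfolding diam_lt_def by blast
    have "pair (U m (Suc k')) x > t" using S(1) St by (simp add: wslice_def)
    then have "pair (U m k') x > t \<or> pair (U (m+2^k') k') x > t" by (rule avg_split)
    then show False
    proof
      assume "pair (U m k') x > t"
      then have "U m k' \<in> S" using A St by (simp add: wslice_def)
      then have "l1norm (\<lambda>t. U m (Suc k') t - U m k' t) \<le> \<delta>" using d S(1) by blast
      then show False using U_dist1 d(1) by simp
    next
      assume "pair (U (m+2^k') k') x > t"
      then have "U (m+2^k') k' \<in> S" using B St by (simp add: wslice_def)
      then have "l1norm (\<lambda>t. U m (Suc k') t - U (m+2^k') k' t) \<le> \<delta>" using d S(1) by blast
      then show False using U_dist2 d(1) by simp
    qed
  qed
  then show ?case using k K_def by simp
qed

lemma cont_tail: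
  assumes "x \<in> C0w" "x \<infinity> > t"
  shows "\<exists>m. \<forall>j\<ge>m. x (enat j) > t"
proof -
  have lim: "((\<lambda>j. enat j) \<longlongrightarrow> \<infinity>) sequentially"
  proof (rule order_tendstoI)
    fix a :: enat assume "a < \<infinity>"
    then obtain b where "a = enat b" by (cases a) auto
    then show "\<forall>\<^sub>F j in sequentially. a < enat j"
      using eventually_gt_at_top[of b] by (auto elim: eventually_mono)
  next
    fix a :: enat assume "a > \<infinity>" then show "\<forall>\<^sub>F j in sequentially. enat j < a" by simp
  qed
  have "((\<lambda>j. x (enat j)) \<longlongrightarrow> x \<infinity>) sequentially"
    using continuous_on_tendsto_compose[OF _ lim, of UNIV x] assms(1) by (simp add: C0w_def)
  then have "\<forall>\<^sub>F j in sequentially. x (enat j) > t" using assms(2) by (rule order_tendstoD)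
  then show ?thesis by (simp add: eventually_sequentially)
qed

lemma f_inf_sum:
  fixes g :: "enat \<Rightarrow> real"
  assumes "\<And>t. t \<noteq> \<infinity> \<Longrightarrow> g t = 0"
  shows "g summable_on UNIV" "infsum g UNIV = g \<infinity>"
proof -
  have sub: "{x\<in>UNIV. g x \<noteq> 0} \<subseteq> {\<infinity>}" using assms by blast
  have "finite {x\<in>UNIV. g x \<noteq> 0}" by (rule finite_subset[OF sub]) simp
  then show "g summable_on UNIV"
    by (rule finite_nonzero_values_imp_summable_on)
  have "infsum g UNIV = infsum g {\<infinity>}"
    by (rule infsum_cong_neutral) (use assms in blast)+
  then show "infsum g UNIV = g \<infinity>" by simp
qed

lemma f_zero: "t \<noteq> \<infinity> \<Longrightarrow> f_omega t = 0"
  by (simp add: f_omega_def)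

lemma f_B: "f_omega \<in> B_l1"
proof -
  have "(\<lambda>t. norm (f_omega t)) summable_on UNIV"
    by (rule f_inf_sum(1)) (simp add: f_zero)
  then have "f_omega \<in> l1w" unfolding l1w_def by simp
  moreover have "infsum (\<lambda>t. \<bar>f_omega t\<bar>) UNIV = \<bar>f_omega \<infinity>\<bar>"
    by (rule f_inf_sum(2)) (simp add: f_zero)
  then have "l1norm f_omega = 1" unfolding l1norm_def by (simp add: f_omega_def)
  ultimately show ?thesis by (simp add: B_l1_def)
qed

lemma f_pair: "pair f_omega x = x \<infinity>"
proof -
  have "infsum (\<lambda>t. f_omega t * x t) UNIV = f_omega \<infinity> * x \<infinity>"
    by (rule f_inf_sum(2)) (simp add: f_zero)
  then show ?thesis unfolding pair_def by (simp add: f_omega_def)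
qed

lemma f_iter: "f_omega \<in> dset_iter (1/2) n B_l1"
proof (induction n)
  case 0
  then show ?case using f_B by simp
next
  case (Suc n)
  define K where "K = dset_iter (1/2) n B_l1"
  have "f_omega \<in> dset (1/2) K"
    unfolding dset_def
  proof (intro DiffI notI)
    show "f_omega \<in> K" using Suc K_def by simp
  next
    assume "f_omega \<in> \<Union>{S. is_wslice K S \<and> diam_lt S (1/2)}"
    then obtain S where S: "f_omega \<in> S" "is_wslice K S" "diam_lt S (1/2)" by blast
    then obtain x t where St: "S = wslice K x t" and x: "x \<in> C0w" unfolding is_wslice_def by blast
    have "x \<infinity> > t" using S(1) St by (simp add: wslice_def f_pair)
    then obtain m where m: "\<forall>j\<ge>m. x (enat j) > t" using cont_tail x by blast
    have "(\<Sum>j\<in>{m..<m+2^Suc n}. t) < (\<Sum>j\<in>{m..<m+2^Suc n}. x (enat j))"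
      by (rule sum_strict_mono) (use m in auto)
    then have "pair (U m (Suc n)) x > t" by (simp add: U_pair field_simps)
    moreover have "U m (Suc n) \<in> K" using claim[of n "Suc n" m] K_def by simp
    ultimately have US: "U m (Suc n) \<in> S" using St by (simp add: wslice_def)
    have "U m (Suc n) \<in> dset (1/2) K" using claim[of "Suc n" "Suc n" m] K_def by simp
    then show False using US S(2,3) unfolding dset_def by blast
  qed
  then show ?case using K_def by simp
qed

theorem mainTheorem8:
  shows "f_omega \<in> dset_omega (1/2) B_l1"
  unfolding dset_omega_def using f_iter by blast

end
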